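(* For each $\ell\in\{1,\dots,N\}$, \[\mathrm{mR}(\lambda^{k^*_\ell}_\ell)\le\mathcal{O}\big(|V|^{(|V|+3)\cdot(|\Pi\setminus J_\ell|+2)}\big)\quad\text{and}\quad \mathrm{mR}(\lambda^{k^*_\ell}_{\ge\ell})\le\mathcal{O}\big(|V|^{(|V|+3)\cdot(|\Pi|+2)}\big).\] In particular $\mathrm{mR}(\lambda^* )\le\mathcal{O}\big(|V|^{(|V|+3)\cdot(|\Pi|+2)}\big)$.
   Context: Let $\mathcal{G}$ be a quantitative reachability game on an arena $G=(\Pi,V,(V_i)_{i\in\Pi},E)$ (finite player set $\Pi$, finite vertex set $V$ with $|V|\ge 2$ and $|\Pi|\le|V|$, partition $(V_i)$, every vertex has a successor) with target sets $F_i\subseteq V$ and costs $\mathrm{Cost}_i(\rho)=$ least $k$ with $\rho_k\in F_i$ (or $+\infty$), and let $v_0\in V$. Extended game: arena $X$ with vertices $V^X=V\times2^\Pi$, edges $((v,I),(v',I'))$ iff $(v,v')\in E$ and $I'=I\cup\{i: v'\in F_i\}$, $(v,I)\in V^X_i$ iff $v\in V_i$, targets $F^X_i=\{(v,I):i\in I\}$, costs $\mathrm{Cost}_i$ (reachability cost w.r.t. $F^X_i$); $x_0=(v_0,\{i:v_0\in F_i\})$. $I(u)$ is the second component of $u\in V^X$. $\mathcal{I}$ is the set of sets $I$ such that some $(v,I)$ is reachable from $x_0$, $N=|\mathcal{I}|$, and $J_1<\dots<J_N$ is a fixed total order of $\mathcal{I}$ extending the partial order $I<I'$ iff $I\neq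 I'$ and some $(v',I')$ is reachable from some $(v,I)$. $V^{J_n}=\{(v,J_n):v\in V\}$, $V^{\ge J_n}=\bigcup_{m\ge n}V^{J_m}$. Labelings: for $\lambda:V^X\to\mathbb{N}\cup\{+\infty\}$, a play $\rho$ of $X$ is $\lambda$-consistent if $\mathrm{Cost}_i(\rho_{\ge n})\le\lambda(\rho_n)$ whenever $\rho_n\in V^X_i$. $\lambda^0(u)=0$ if $u\in V^X_i$ and $i\in I(u)$, $+\infty$ otherwise. The update of $\lambda^k$ w.r.t. $V^{\ge J_n}$ keeps $\lambda^k$ outside $V^{\ge J_n}$ and, for $u\in V^{\ge J_n}\cap V^X_i$, sets $\lambda^{k+1}(u)=0$ if $i\in I(u)$ and otherwise $1+\min_{(u,u')\in E^X}\sup\{\mathrm{Cost}_i(\rho):\rho \text{ a } \lambda^k\text{-consistent play from } u'\}$ (with $1+(+\infty)=+\infty$). The sequence $(\lambda^k)$ is generated with $n_0=N$, $\lambda^{k+1}=$ update of $\lambda^k$ w.r.t. $V^{\ge J_{n_k}}$, $n_{k+1}=n_k-1$ if $\lambda^{k+1}=\lambda^k$ and $n_k>1$, else $n_{k+1}=n_k$. Let $k^*_N=0$ and, for $\ell<N$, $k^*_\ell$ be the least $k>k^*_{\ell+1}$ with $\lambda^{k+1}=\lambda^k$ (these are finite); $\lambda^*=\lambda^{k^*_1}$, which satisfies $\lambda^{k^*_1+m}=\lambda^*$ for all $m$. Maximal finite range: for a function $f$ with values in $\mathbb{N}\cup\{+\infty\}$, $\mathrm{mR}(f)$ is the maximum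 of its finite values, and $0$ if it has none. For a labeling $\lambda$, $\lambda_n$ and $\lambda_{\ge n}$ denote its restrictions to $V^{J_n}$ and $V^{\ge J_n}$ (so $\mathrm{mR}(\lambda_n)=0$ when $J_n$ is a bottom region). The $\mathcal{O}$ is with respect to the game parameters $|V|,|\Pi|$. *)

theory Defs
  imports Complex_Main "HOL-Library.Extended_Nat"
begin

text \<open>Quantitative reachability games. Vertices and players are natural numbers,
  so that the hidden constant of the O-bound is uniform over all games.\<close>

record rgame =
  Vs  :: "nat set"
  Ps  :: "nat set"
  own :: "nat \<Rightarrow> nat"         (* v \<in> V_i iff own v = i *)
  Es  :: "(nat \<times> nat) set"
  Fs  :: "nat \<Rightarrow> nat set"

definition arena :: "rgame \<Rightarrow> bool" where
  "arena G \<longleftrightarrow> finite (Vs G) \<and> finite (Ps G) \<and> card (Vs G) \<ge> 2 \<and> card (Ps G) \<le> card (Vs G)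
     \<and> Es G \<subseteq> Vs G \<times> Vs G \<and> (\<forall>v\<in>Vs G. \<exists>v'. (v, v') \<in> Es G)
     \<and> (\<forall>v\<in>Vs G. own G v \<in> Ps G) \<and> (\<forall>i\<in>Ps G. Fs G i \<subseteq> Vs G)"

type_synonym xv = "nat \<times> nat set"

definition XV :: "rgame \<Rightarrow> xv set" where
  "XV G = Vs G \<times> Pow (Ps G)"

definition XE :: "rgame \<Rightarrow> (xv \<times> xv) set" where
  "XE G = {((v, I), (v', I')). (v, v') \<in> Es G \<and> I \<subseteq> Ps G \<and> I' = I \<union> {i \<in> Ps G. v' \<in> Fs G i}}"

definition x0 :: "rgame \<Rightarrow> nat \<Rightarrow> xv" where
  "x0 G v0 = (v0, {i \<in> Ps G. v0 \<in> Fs G i})"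

definition Iset :: "rgame \<Rightarrow> nat \<Rightarrow> nat set set" where
  "Iset G v0 = snd ` {u. (x0 G v0, u) \<in> (XE G)\<^sup>*}"

definition Nreg :: "rgame \<Rightarrow> nat \<Rightarrow> nat" where
  "Nreg G v0 = card (Iset G v0)"

definition regprec :: "rgame \<Rightarrow> nat set \<Rightarrow> nat set \<Rightarrow> bool" where
  "regprec G I I' \<longleftrightarrow> I \<noteq> I' \<and> (\<exists>v v'. ((v, I), (v', I')) \<in> (XE G)\<^sup>*)"

definition order_ok :: "rgame \<Rightarrow> nat \<Rightarrow> (nat \<Rightarrow> nat set) \<Rightarrow> bool" where
  "order_ok G v0 J \<longleftrightarrow> bij_betw J {1..Nreg G v0} (Iset G v0)
     \<and> (\<forall>m\<in>{1..Nreg G v0}. \<forall>n\<in>{1..Nreg G v0}. regprec G (J m) (J n) \<longrightarrow> m < n)"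

definition VJ :: "rgame \<Rightarrow> (nat \<Rightarrow> nat set) \<Rightarrow> nat \<Rightarrow> xv set" where
  "VJ G J n = Vs G \<times> {J n}"

definition Vge :: "rgame \<Rightarrow> nat \<Rightarrow> (nat \<Rightarrow> nat set) \<Rightarrow> nat \<Rightarrow> xv set" where
  "Vge G v0 J n = (\<Union>m\<in>{n..Nreg G v0}. VJ G J m)"

definition play :: "rgame \<Rightarrow> (nat \<Rightarrow> xv) \<Rightarrow> bool" where
  "play G \<rho> \<longleftrightarrow> (\<forall>n. (\<rho> n, \<rho> (Suc n)) \<in> XE G)"

definition cost :: "nat \<Rightarrow> (nat \<Rightarrow> xv) \<Rightarrow> enat" where
  "cost i \<rho> = (if \<exists>k. i \<in> snd (\<rho> k) then enat (LEAST k. i \<in> snd (\<rho> k)) else \<infinity>)"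

definition consistent :: "rgame \<Rightarrow> (xv \<Rightarrow> enat) \<Rightarrow> (nat \<Rightarrow> xv) \<Rightarrow> bool" where
  "consistent G lam \<rho> \<longleftrightarrow> play G \<rho> \<and>
     (\<forall>n. cost (own G (fst (\<rho> n))) (\<lambda>k. \<rho> (n + k)) \<le> lam (\<rho> n))"

definition lam0 :: "rgame \<Rightarrow> xv \<Rightarrow> enat" where
  "lam0 G u = (if own G (fst u) \<in> snd u then 0 else \<infinity>)"

definition upd :: "rgame \<Rightarrow> (xv \<Rightarrow> enat) \<Rightarrow> xv set \<Rightarrow> xv \<Rightarrow> enat" where
  "upd G lam S u =
    (if u \<in> S then
       (if own G (fst u) \<in> snd u then 0
        else 1 + (INF u'\<in>{u'. (u, u') \<in> XE G}.
                    SUP \<rho>\<in>{\<rho>. consistent G lam \<rho> \<and> \<rho> 0 = u'}. cost (own G (fst u)) \<rho>))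
     else lam u)"

primrec lamseq :: "rgame \<Rightarrow> nat \<Rightarrow> (nat \<Rightarrow> nat set) \<Rightarrow> nat \<Rightarrow> (xv \<Rightarrow> enat) \<times> nat" where
  "lamseq G v0 J 0 = (lam0 G, Nreg G v0)"
| "lamseq G v0 J (Suc k) =
     (let l = fst (lamseq G v0 J k); n = snd (lamseq G v0 J k);
          l' = upd G l (Vge G v0 J n) in
      (l', if l' = l \<and> n > 1 then n - 1 else n))"

definition lam :: "rgame \<Rightarrow> nat \<Rightarrow> (nat \<Rightarrow> nat set) \<Rightarrow> nat \<Rightarrow> xv \<Rightarrow> enat" where
  "lam G v0 J k = fst (lamseq G v0 J k)"

text \<open>kst j = k*_(N-j): k*_N = 0, k*_l = least k > k*_(l+1) with lambda^(k+1) = lambda^k.\<close>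
primrec kst :: "rgame \<Rightarrow> nat \<Rightarrow> (nat \<Rightarrow> nat set) \<Rightarrow> nat \<Rightarrow> nat" where
  "kst G v0 J 0 = 0"
| "kst G v0 J (Suc j) = (LEAST k. kst G v0 J j < k \<and> lam G v0 J (Suc k) = lam G v0 J k)"

definition kstar :: "rgame \<Rightarrow> nat \<Rightarrow> (nat \<Rightarrow> nat set) \<Rightarrow> nat \<Rightarrow> nat" where
  "kstar G v0 J l = kst G v0 J (Nreg G v0 - l)"

definition mR :: "enat set \<Rightarrow> nat" where
  "mR S = (if \<exists>n. enat n \<in> S then Max {n. enat n \<in> S} else 0)"

end

theory Submission
  imports Defs
begin



definition Fv :: "rgame \<Rightarrow> (xv \<Rightarrow> enat) \<Rightarrow> xv \<Rightarrow> enat" where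
 "Fv G lm u = (if own G (fst u) \<in> snd u then 0 else 1 + (INF u'\<in>{u'. (u, u') \<in> XE G}.
      SUP \<rho>\<in>{\<rho>. consistent G lm \<rho> \<and> \<rho> 0 = u'}. cost (own G (fst u)) \<rho>))"

lemma upd_Fv: "upd G lm S u = (if u \<in> S then Fv G lm u else lm u)"
  by (simp add: upd_def Fv_def)

lemma consistent_mono:
  assumes "\<And>u. lm u \<le> lm' u" "consistent G lm \<rho>" shows "consistent G lm' \<rho>"
  using assms unfolding consistent_def by (meson order_trans)

lemma Fv_anti:
  assumes "\<And>u. lm u \<le> lm' u" shows "Fv G lm u \<le> Fv G lm' u"
proof -
  have "(SUP \<rho>\<in>{\<rho>. consistent G lm \<rho> \<and> \<rho> 0 = u'}. cost i \<rho>)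
      \<le> (SUP \<rho>\<in>{\<rho>. consistent G lm' \<rho> \<and> \<rho> 0 = u'}. cost i \<rho>)" for u' i
    by (rule SUP_subset_mono) (auto intro: consistent_mono[OF assms])
  then have "(INF u'\<in>A. SUP \<rho>\<in>{\<rho>. consistent G lm \<rho> \<and> \<rho> 0 = u'}. cost i \<rho>)
     \<le> (INF u'\<in>A. SUP \<rho>\<in>{\<rho>. consistent G lm' \<rho> \<and> \<rho> 0 = u'}. cost i \<rho>)" for A i
    by (rule INF_mono')
  then show ?thesis unfolding Fv_def by (auto intro: add_left_mono)
qed

lemma seq_Q:
  assumes l0: "l 0 = lam0 G" and lS: "\<And>t. l (Suc t) = upd G (l t) (S t)"
  shows "\<forall>u. Fv G (l t) u \<le> l t u"
proof (induction t)
  case 0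
  show ?case unfolding l0 by (auto simp: lam0_def Fv_def)
next
  case (Suc t)
  have dec: "l (Suc t) u \<le> l t u" for u using Suc[rule_format, of u] by (simp add: lS upd_Fv)
  have "Fv G (l (Suc t)) u \<le> Fv G (l t) u" for u by (rule Fv_anti[OF dec])
  have "Fv G (l (Suc t)) u \<le> l (Suc t) u" for u
  proof (cases "u \<in> S t")
    case True
    then have "l (Suc t) u = Fv G (l t) u" by (simp add: lS upd_Fv)
    then show ?thesis using \<open>Fv G (l (Suc t)) u \<le> Fv G (l t) u\<close> by simp
  next
    case False
    then have "l (Suc t) u = l t u" by (simp add: lS upd_Fv)
    then show ?thesis using \<open>Fv G (l (Suc t)) u \<le> Fv G (l t) u\<close> Suc[rule_format, of u] by simp
  qed
  then show ?case by blast
qed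

lemma seq_dec:
  assumes l0: "l 0 = lam0 G" and lS: "\<And>t. l (Suc t) = upd G (l t) (S t)"
  shows "l (Suc t) u \<le> l t u"
  using seq_Q[OF assms, of t, rule_format, of u] by (simp add: lS upd_Fv)

lemma cost_enat_iff: "cost i \<rho> = enat c \<longleftrightarrow> (i \<in> snd (\<rho> c) \<and> (\<forall>k<c. i \<notin> snd (\<rho> k)))"
proof
  assume h: "cost i \<rho> = enat c"
  then have ex: "\<exists>k. i \<in> snd (\<rho> k)" unfolding cost_def by (auto split: if_splits)
  with h have "c = (LEAST k. i \<in> snd (\<rho> k))" unfolding cost_def by auto
  then show "i \<in> snd (\<rho> c) \<and> (\<forall>k<c. i \<notin> snd (\<rho> k))"
    using LeastI_ex[OF ex] not_less_Least by auto
next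
  assume h: "i \<in> snd (\<rho> c) \<and> (\<forall>k<c. i \<notin> snd (\<rho> k))"
  then have "(LEAST k. i \<in> snd (\<rho> k)) = c"
    by (intro Least_equality) (auto simp: not_less[symmetric])
  then show "cost i \<rho> = enat c" using h unfolding cost_def by auto
qed

lemma cost_inf_iff: "cost i \<rho> = \<infinity> \<longleftrightarrow> (\<forall>k. i \<notin> snd (\<rho> k))"
  by (simp add: cost_def)

lemma cost_0: "i \<in> snd (\<rho> 0) \<Longrightarrow> cost i \<rho> = 0"
proof -
  assume "i \<in> snd (\<rho> 0)"
  then have "cost i \<rho> = enat 0" by (simp add: cost_enat_iff)
  then show ?thesis by (simp add: zero_enat_def)
qed

lemma cost_agree:
  assumes ag: "\<And>d. d \<le> x \<Longrightarrow> \<rho> d = \<rho>' d" and ix: "i \<in> snd (\<rho> x)"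
  shows "cost i \<rho> = cost i \<rho>'"
proof -
  obtain c where c: "cost i \<rho> = enat c"
    using ix cost_inf_iff by (cases "cost i \<rho>") auto
  have cx: "c \<le> x" using c ix by (metis cost_enat_iff not_le)
  have "cost i \<rho>' = enat c" using c cx ag unfolding cost_enat_iff
    by (metis le_trans less_imp_le_nat order_refl)
  then show ?thesis using c by simp
qed

lemma XE_D:
  assumes "(x, y) \<in> XE G"
  shows "(fst x, fst y) \<in> Es G \<and> snd x \<subseteq> Ps G \<and> snd y = snd x \<union> {i \<in> Ps G. fst y \<in> Fs G i}"
  using assms by (cases x; cases y) (auto simp: XE_def)

lemma play_mono:
  assumes "play G \<rho>" "a \<le> b" shows "snd (\<rho> a) \<subseteq> snd (\<rho> b)"
  using assms(2)
proof (induction b rule: dec_induct)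
  case base then show ?case by simp
next
  case (step b)
  have "(\<rho> b, \<rho> (Suc b)) \<in> XE G" using assms(1) by (simp add: play_def)
  then show ?case using step XE_D by blast
qed

lemma play_Ps: "play G \<rho> \<Longrightarrow> snd (\<rho> k) \<subseteq> Ps G"
  using XE_D unfolding play_def by blast

lemma play_Vs: "arena G \<Longrightarrow> play G \<rho> \<Longrightarrow> fst (\<rho> k) \<in> Vs G"
  using XE_D unfolding play_def arena_def by blast



lemma pump:
  fixes \<rho> :: "nat \<Rightarrow> xv"
  assumes ar: "arena G" and cons: "consistent G lm \<rho>" and cst: "cost i \<rho> = enat c"
    and Lb: "\<And>k m. lm (\<rho> k) = enat m \<Longrightarrow> m \<le> L"
    and noinf: "\<And>\<rho>'. consistent G lm \<rho>' \<Longrightarrow> \<rho>' 0 = \<rho> 0 \<Longrightarrow> cost i \<rho>' \<noteq> \<infinity>"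
  shows "c \<le> (card (Ps G) + 1) * (card (Vs G) + L)"
proof -
  have pl: "play G \<rho>" using cons by (simp add: consistent_def)
  have cc: "\<And>n. cost (own G (fst (\<rho> n))) (\<lambda>k. \<rho> (n + k)) \<le> lm (\<rho> n)"
    using cons by (simp add: consistent_def)
  have ic: "\<And>k. k < c \<Longrightarrow> i \<notin> snd (\<rho> k)" using cst by (simp add: cost_enat_iff)
  have Im: "\<And>a b. a \<le> b \<Longrightarrow> snd (\<rho> a) \<subseteq> snd (\<rho> b)" using play_mono[OF pl] by blast
  define cstr where "cstr n \<longleftrightarrow> own G (fst (\<rho> n)) \<notin> snd (\<rho> n) \<and> lm (\<rho> n) \<noteq> \<infinity>" for n
  define cov where "cov m \<longleftrightarrow> (\<exists>n\<le>m. cstr n \<and> own G (fst (\<rho> n)) \<notin> snd (\<rho> m))" for m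
  have nopump: "False" if st: "s < s'" "s' < c" "\<rho> s = \<rho> s'" and nc: "\<And>m. s \<le> m \<Longrightarrow> m < s' \<Longrightarrow> \<not> cov m" for s s'
  proof -
    define P where "P = s' - s"
    have P0: "P > 0" using st by (simp add: P_def)
    define \<rho>' where "\<rho>' k = (if k < s then \<rho> k else \<rho> (s + (k - s) mod P))" for k
    have agree: "\<rho>' k = \<rho> k" if "k < s'" for k
    proof (cases "k < s")
      case False
      then have "(k - s) mod P = k - s" using that by (simp add: P_def)
      then show ?thesis using False by (simp add: \<rho>'_def)
    qed (simp add: \<rho>'_def)
    have rng: "\<exists>m. m < s' \<and> \<rho>' k = \<rho> m \<and> (s \<le> k \<longrightarrow> s \<le> m)" for k
    proof (cases "k < s")
      case True then show ?thesis using st by (auto simp: \<rho>'_def intro!: exI[of _ k])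
    next
      case False
      have "(k - s) mod P < P" using P0 by simp
      then show ?thesis using False by (auto simp: \<rho>'_def P_def intro!: exI[of _ "s + (k - s) mod P"])
    qed
    have pl': "play G \<rho>'"
      unfolding play_def
    proof
      fix k
      show "(\<rho>' k, \<rho>' (Suc k)) \<in> XE G"
      proof (cases "k < s")
        case True
        then have "\<rho>' (Suc k) = \<rho> (Suc k)"
        proof (cases "Suc k < s")
          case False
          then have "Suc k = s" using True by simp
          then show ?thesis using st by (simp add: \<rho>'_def)
        qed (simp add: \<rho>'_def)
        then show ?thesis using True pl by (simp add: \<rho>'_def play_def)
      next
        case False
        define r where "r = (k - s) mod P"
        have rP: "r < P" using P0 by (simp add: r_def)
        have e1: "\<rho>' k = \<rho> (s + r)" using False by (simp add: \<rho>'_def r_def)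
        have sk: "Suc k - s = Suc (k - s)" using False by simp
        have e2: "\<rho>' (Suc k) = \<rho> (Suc (s + r))"
        proof (cases "Suc r = P")
          case True
          then have "Suc k - s = Suc (k - s)" "Suc (k - s) mod P = 0"
            using sk by (auto simp: mod_Suc r_def)
          then have "\<rho>' (Suc k) = \<rho> s" using False by (simp add: \<rho>'_def)
          also have "\<dots> = \<rho> (Suc (s + r))"
          proof -
            have "Suc (s + r) = s'" using st True by (simp add: P_def)
            then show ?thesis using st by simp
          qed
          finally show ?thesis .
        next
          case F2: False
          then have "Suc (k - s) mod P = Suc r" by (simp add: mod_Suc r_def)
          then show ?thesis using False sk by (simp add: \<rho>'_def)
        qed
        show ?thesis using e1 e2 pl by (simp add: play_def)
      qed
    qed
    have cons': "consistent G lm \<rho>'"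
      unfolding consistent_def
    proof (intro conjI pl' allI)
      fix k
      let ?o = "own G (fst (\<rho>' k))"
      show "cost ?o (\<lambda>d. \<rho>' (k + d)) \<le> lm (\<rho>' k)"
      proof (cases "k < s")
        case True
        then have rk: "\<rho>' k = \<rho> k" by (simp add: \<rho>'_def)
        show ?thesis
        proof (cases "lm (\<rho> k) = \<infinity> \<or> ?o \<in> snd (\<rho> k)")
          case True
          then show ?thesis
          proof
            assume "?o \<in> snd (\<rho> k)"
            then have "cost ?o (\<lambda>d. \<rho>' (k + d)) = 0" using rk by (intro cost_0) simp
            then show ?thesis by simp
          qed (simp add: rk)
        next
          case False
          then have "cstr k" using rk by (simp add: cstr_def)
          moreover have "\<not> cov s" using nc st by simp
          ultimately have os: "?o \<in> snd (\<rho> (k + (s - k)))" using True rk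
            unfolding cov_def by auto
          have "cost ?o (\<lambda>d. \<rho> (k + d)) = cost ?o (\<lambda>d. \<rho>' (k + d))"
            by (rule cost_agree[where x="s - k" and \<rho>="\<lambda>d. \<rho> (k + d)", OF _ os]) (use agree st True in auto)
          then show ?thesis using cc[of k] rk by simp
        qed
      next
        case False
        obtain m where m: "m < s'" "\<rho>' k = \<rho> m" "s \<le> m" using rng[of k] False by auto
        have "\<not> cov m" using nc m by simp
        then have "\<not> cstr m" unfolding cov_def by (auto simp: cstr_def)
        then have "own G (fst (\<rho> m)) \<in> snd (\<rho> m) \<or> lm (\<rho> m) = \<infinity>" by (simp add: cstr_def)
        then show ?thesis
        proof
          assume "own G (fst (\<rho> m)) \<in> snd (\<rho> m)"
          then have "cost ?o (\<lambda>d. \<rho>' (k + d)) = 0" using m by (intro cost_0) simp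
          then show ?thesis by simp
        qed (simp add: m)
      qed
    qed
    have "cost i \<rho>' = \<infinity>"
      unfolding cost_inf_iff
    proof
      fix k
      obtain m where "m < s'" "\<rho>' k = \<rho> m" using rng[of k] by auto
      then show "i \<notin> snd (\<rho>' k)" using ic st by simp
    qed
    moreover have "\<rho>' 0 = \<rho> 0" using agree st by simp
    ultimately show False using noinf[OF cons'] by simp
  qed
  define R where "R = (\<lambda>k. snd (\<rho> k)) ` {..<c}"
  define M where "M r = {m. m < c \<and> snd (\<rho> m) = r}" for r
  have Rfin: "finite R" by (simp add: R_def)
  have Mb: "card (M r) \<le> card (Vs G) + L" for r
  proof -
    define U where "U = {m \<in> M r. \<not> cov m}"
    define Cv where "Cv = {m \<in> M r. cov m}"
    have MUC: "M r = U \<union> Cv" by (auto simp: U_def Cv_def)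
    have covp: "cov y" if "cov x" "x \<le> y" "snd (\<rho> y) = snd (\<rho> x)" for x y
      using that unfolding cov_def by (metis order_trans)
    have h: False if "m1 \<in> U" "m2 \<in> U" "m1 < m2" "fst (\<rho> m1) = fst (\<rho> m2)" for m1 m2
    proof -
      have s12: "snd (\<rho> m1) = r" "snd (\<rho> m2) = r" "m2 < c" using that by (auto simp: U_def M_def)
      have eq: "\<rho> m1 = \<rho> m2" using that(4) s12 by (simp add: prod_eq_iff)
      show False
      proof (rule nopump[OF that(3) s12(3) eq])
        fix x assume x: "m1 \<le> x" "x < m2"
        have "snd (\<rho> x) = r" using Im[of m1 x] Im[of x m2] x s12 by auto
        moreover have "\<not> cov m2" using that by (simp add: U_def)
        ultimately show "\<not> cov x" using covp[of x m2] x s12 by auto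
      qed
    qed
    have "inj_on (\<lambda>m. fst (\<rho> m)) U"
    proof (rule inj_onI)
      fix m1 m2 assume a: "m1 \<in> U" "m2 \<in> U" "fst (\<rho> m1) = fst (\<rho> m2)"
      show "m1 = m2"
      proof (rule ccontr)
        assume "m1 \<noteq> m2"
        then consider "m1 < m2" | "m2 < m1" by linarith
        then show False using h a by metis
      qed
    qed
    moreover have "(\<lambda>m. fst (\<rho> m)) ` U \<subseteq> Vs G" using play_Vs[OF ar pl] by auto
    moreover have "finite (Vs G)" using ar by (simp add: arena_def)
    ultimately have cU: "card U \<le> card (Vs G)" by (rule card_inj_on_le)
    have cC: "card Cv \<le> L"
    proof (cases "Cv = {}")
      case False
      have fC: "finite Cv" by (rule finite_subset[of _ "{..<c}"]) (auto simp: Cv_def M_def)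
      define a where "a = Min Cv"
      have aC: "a \<in> Cv" using False fC by (simp add: a_def)
      then obtain n where n: "n \<le> a" "cstr n" "own G (fst (\<rho> n)) \<notin> snd (\<rho> a)"
        by (auto simp: Cv_def cov_def)
      let ?j = "own G (fst (\<rho> n))"
      obtain l where l: "lm (\<rho> n) = enat l" using n(2) by (cases "lm (\<rho> n)") (auto simp: cstr_def)
      have lL: "l \<le> L" using Lb l by simp
      have cj: "cost ?j (\<lambda>k. \<rho> (n + k)) \<le> enat l" using cc[of n] l by simp
      then obtain d where d: "cost ?j (\<lambda>k. \<rho> (n + k)) = enat d" "d \<le> l"
        by (cases "cost ?j (\<lambda>k. \<rho> (n + k))") auto
      have jd: "?j \<in> snd (\<rho> (n + d))" using d(1) by (simp add: cost_enat_iff)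
      have ar_: "snd (\<rho> a) = r" using aC by (simp add: Cv_def M_def)
      have "Cv \<subseteq> {a..<a + L}"
      proof
        fix x assume x: "x \<in> Cv"
        have ax: "a \<le> x" using x fC by (simp add: a_def)
        have sx: "snd (\<rho> x) = r" using x by (simp add: Cv_def M_def)
        have "x < n + d"
        proof (rule ccontr)
          assume "\<not> x < n + d"
          then have "snd (\<rho> (n + d)) \<subseteq> snd (\<rho> x)" using Im by simp
          then show False using jd sx ar_ n(3) by auto
        qed
        then show "x \<in> {a..<a + L}" using ax n(1) d(2) lL by simp
      qed
      then have "card Cv \<le> card {a..<a + L}" by (rule card_mono[rotated]) simp
      then show ?thesis by simp
    qed simp
    have "card (M r) \<le> card U + card Cv" unfolding MUC by (rule card_Un_le)
    then show ?thesis using cU cC by simp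
  qed
  have Rb: "card R \<le> card (Ps G) + 1"
  proof -
    have fP: "finite (Ps G)" using ar by (simp add: arena_def)
    have RP: "\<And>r. r \<in> R \<Longrightarrow> r \<subseteq> Ps G" using play_Ps[OF pl] by (auto simp: R_def)
    have ch: "\<And>r1 r2. r1 \<in> R \<Longrightarrow> r2 \<in> R \<Longrightarrow> r1 \<subseteq> r2 \<or> r2 \<subseteq> r1"
      unfolding R_def using Im nat_le_linear by blast
    have "inj_on card R"
    proof (rule inj_onI)
      fix r1 r2 assume a: "r1 \<in> R" "r2 \<in> R" "card r1 = card r2"
      have f: "finite r1" "finite r2" using RP a fP finite_subset by blast+
      from ch[OF a(1,2)] show "r1 = r2"
        using card_subset_eq f a(3) by metis
    qed
    moreover have "card ` R \<subseteq> {0..card (Ps G)}" using RP fP by (auto simp: card_mono)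
    ultimately have "card R \<le> card {0..card (Ps G)}" by (rule card_inj_on_le) simp
    then show ?thesis by simp
  qed
  have "{..<c} = (\<Union>r\<in>R. M r)" by (auto simp: R_def M_def)
  then have "c \<le> (\<Sum>r\<in>R. card (M r))" using card_UN_le[OF Rfin, of M] by (metis card_lessThan)
  also have "\<dots> \<le> card R * (card (Vs G) + L)" using sum_bounded_above[of R "\<lambda>r. card (M r)"] Mb by simp
  also have "\<dots> \<le> (card (Ps G) + 1) * (card (Vs G) + L)" using Rb by (intro mult_right_mono) simp_all
  finally show ?thesis .
qed



definition gstep :: "nat \<Rightarrow> nat \<Rightarrow> nat \<Rightarrow> nat" where
  "gstep p n x = 1 + (p + 1) * (n + x)"

lemma gstep_mono: "x \<le> y \<Longrightarrow> gstep p n x \<le> gstep p n y"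
  by (simp add: gstep_def add_mono mult_left_mono)

lemma gstep_infl: "x \<le> gstep p n x"
  by (simp add: gstep_def)

lemma gpow_mono: "x \<le> y \<Longrightarrow> (gstep p n ^^ j) x \<le> (gstep p n ^^ j) y"
  by (induction j) (auto intro: gstep_mono)

lemma gpow_infl: "x \<le> (gstep p n ^^ j) x"
  by (induction j) (auto intro: order_trans[OF _ gstep_infl])

lemma gpow_le:
  assumes "a \<le> b" shows "(gstep p n ^^ a) x \<le> (gstep p n ^^ b) x"
proof -
  obtain d where b: "b = a + d" using assms le_Suc_ex by blast
  have "(gstep p n ^^ b) x = (gstep p n ^^ a) ((gstep p n ^^ d) x)" by (simp add: b funpow_add)
  then show ?thesis using gpow_mono[OF gpow_infl] by simp
qed

lemma step_bound:
  assumes ar: "arena G" and v: "v \<in> Vs G" and own: "own G v \<notin> I"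
    and Lb: "\<And>v'' I'' m. v'' \<in> Vs G \<Longrightarrow> I \<subseteq> I'' \<Longrightarrow> I'' \<subseteq> Ps G \<Longrightarrow> lm (v'', I'') = enat m \<Longrightarrow> m \<le> L"
    and F: "Fv G lm (v, I) = enat m"
  shows "m \<le> gstep (card (Ps G)) (card (Vs G)) L"
proof -
  let ?i = "own G v"
  define B where "B = (card (Ps G) + 1) * (card (Vs G) + L)"
  define SP where "SP u' = (SUP \<rho>\<in>{\<rho>. consistent G lm \<rho> \<and> \<rho> 0 = u'}. cost ?i \<rho>)" for u'
  define INFV where "INFV = (INF u'\<in>{u'. ((v,I), u') \<in> XE G}. SP u')"
  have F': "1 + INFV = enat m" using F own by (simp add: Fv_def SP_def INFV_def)
  then have "INFV < \<infinity>" by (cases INFV) auto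
  then have "\<exists>u'\<in>{u'. ((v,I), u') \<in> XE G}. SP u' < \<infinity>"
    unfolding INFV_def by (simp only: INF_less_iff)
  then obtain u' where u': "((v,I),u') \<in> XE G" "SP u' < \<infinity>" by blast
  have "SP u' \<le> enat B"
    unfolding SP_def
  proof (rule SUP_least)
    fix \<rho> assume "\<rho> \<in> {\<rho>. consistent G lm \<rho> \<and> \<rho> 0 = u'}"
    then have cons: "consistent G lm \<rho>" and r0: "\<rho> 0 = u'" by auto
    have le: "cost ?i \<rho>' \<le> SP u'" if "consistent G lm \<rho>'" "\<rho>' 0 = u'" for \<rho>'
      unfolding SP_def by (rule SUP_upper) (use that in simp)
    have noinf: "cost ?i \<rho>' \<noteq> \<infinity>" if "consistent G lm \<rho>'" "\<rho>' 0 = \<rho> 0" for \<rho>'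
    proof -
      have "cost ?i \<rho>' \<le> SP u'" using le[of \<rho>'] that r0 by simp
      then show ?thesis using u'(2) by (metis infinity_ileE less_irrefl order.strict_trans1)
    qed
    obtain c where c: "cost ?i \<rho> = enat c" using noinf[OF cons refl] by auto
    have pl: "play G \<rho>" using cons by (simp add: consistent_def)
    have Lb': "m' \<le> L" if "lm (\<rho> k) = enat m'" for k m'
    proof -
      have "I \<subseteq> snd u'" using XE_D[OF u'(1)] by simp
      then have "I \<subseteq> snd (\<rho> k)" using play_mono[OF pl, of 0 k] r0 by auto
      moreover have "snd (\<rho> k) \<subseteq> Ps G" by (rule play_Ps[OF pl])
      moreover have "fst (\<rho> k) \<in> Vs G" by (rule play_Vs[OF ar pl])
      ultimately show ?thesis using Lb[of "fst (\<rho> k)" "snd (\<rho> k)" m'] that by simp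
    qed
    have "c \<le> B" unfolding B_def by (rule pump[OF ar cons c Lb' noinf])
    then show "cost ?i \<rho> \<le> enat B" using c by simp
  qed
  moreover have "INFV \<le> SP u'" unfolding INFV_def by (rule INF_lower) (use u' in simp)
  ultimately have "INFV \<le> enat B" by simp
  then show ?thesis using F' by (cases INFV) (auto simp: gstep_def B_def one_enat_def)
qed



lemma main_bound:
  assumes ar: "arena G" and l0: "l 0 = lam0 G" and lS: "\<And>t. l (Suc t) = upd G (l t) (S t)"
  shows "card (Ps G - I) = k \<Longrightarrow> I \<subseteq> Ps G \<Longrightarrow> v \<in> Vs G \<Longrightarrow> l t (v, I) = enat m
    \<Longrightarrow> m \<le> (gstep (card (Ps G)) (card (Vs G)) ^^ (card (Vs G) * (k + 1))) 0"
proof (induction k arbitrary: I t v m rule: less_induct)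
  case (less k)
  define n where "n = card (Vs G)"
  define g where "g = gstep (card (Ps G)) n"
  define Prev where "Prev = (g ^^ (n * k)) 0"
  have fP: "finite (Ps G)" and fV: "finite (Vs G)" using ar by (auto simp: arena_def)
  have H: "m \<le> Prev" if "I \<subset> I''" "I'' \<subseteq> Ps G" "v'' \<in> Vs G" "l t (v'', I'') = enat m" for t v'' I'' m
  proof -
    have "Ps G - I'' \<subset> Ps G - I" using that less.prems(2) by blast
    then have lt: "card (Ps G - I'') < k" using fP less.prems(1) by (metis finite_Diff psubset_card_mono)
    have "m \<le> (g ^^ (n * (card (Ps G - I'') + 1))) 0"
      using less.IH[OF lt refl that(2,3,4)] by (simp add: g_def n_def)
    also have "\<dots> \<le> Prev" unfolding Prev_def g_def using lt by (intro gpow_le mult_le_mono2) simp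
    finally show ?thesis .
  qed
  define f where "f t = card {v \<in> Vs G. l t (v, I) \<noteq> \<infinity>}" for t
  have dec: "\<And>t u. l (Suc t) u \<le> l t u" by (rule seq_dec[OF l0 lS])
  have fsub: "{v \<in> Vs G. l t (v, I) \<noteq> \<infinity>} \<subseteq> {v \<in> Vs G. l (Suc t) (v, I) \<noteq> \<infinity>}" for t
  proof
    fix x assume x: "x \<in> {v \<in> Vs G. l t (v, I) \<noteq> \<infinity>}"
    have "l (Suc t) (x, I) \<le> l t (x, I)" by (rule dec)
    then show "x \<in> {v \<in> Vs G. l (Suc t) (v, I) \<noteq> \<infinity>}" using x by (cases "l (Suc t) (x, I)") auto
  qed
  have fmono: "f t \<le> f (Suc t)" for t unfolding f_def by (rule card_mono[OF _ fsub]) (simp add: fV)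
  have fle: "f t \<le> n" for t unfolding f_def n_def by (rule card_mono[OF fV]) auto
  have inner: "\<forall>v m. v \<in> Vs G \<longrightarrow> l t (v, I) = enat m \<longrightarrow> m \<le> (g ^^ f t) Prev" for t
  proof (induction t)
    case 0
    show ?case by (auto simp: l0 lam0_def zero_enat_def)
  next
    case (Suc t)
    show ?case
    proof (intro allI impI)
      fix v m assume v: "v \<in> Vs G" and lm: "l (Suc t) (v, I) = enat m"
      show "m \<le> (g ^^ f (Suc t)) Prev"
      proof (cases "l t (v, I) = \<infinity>")
        case False
        then obtain m0 where m0: "l t (v, I) = enat m0" by auto
        have "m \<le> m0" using dec[of t "(v, I)"] lm m0 by simp
        also have "m0 \<le> (g ^^ f t) Prev" using Suc v m0 by simp
        also have "\<dots> \<le> (g ^^ f (Suc t)) Prev" unfolding g_def by (rule gpow_le[OF fmono])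
        finally show ?thesis .
      next
        case True
        have inS: "(v, I) \<in> S t"
        proof (rule ccontr)
          assume "(v, I) \<notin> S t"
          then have "l (Suc t) (v, I) = l t (v, I)" by (simp add: lS upd_Fv)
          then show False using True lm by simp
        qed
        have Fv: "Fv G (l t) (v, I) = enat m" using lm inS by (simp add: lS upd_Fv)
        have fs: "Suc (f t) \<le> f (Suc t)"
        proof -
          have "{v \<in> Vs G. l t (v, I) \<noteq> \<infinity>} \<subset> {v \<in> Vs G. l (Suc t) (v, I) \<noteq> \<infinity>}"
          proof (rule psubsetI[OF fsub])
            show "{v \<in> Vs G. l t (v, I) \<noteq> \<infinity>} \<noteq> {v \<in> Vs G. l (Suc t) (v, I) \<noteq> \<infinity>}"
              using True lm v by (metis (mono_tags, lifting) enat.distinct(1) mem_Collect_eq)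
          qed
          then have "f t < f (Suc t)" unfolding f_def by (rule psubset_card_mono[rotated]) (simp add: fV)
          then show ?thesis by simp
        qed
        show ?thesis
        proof (cases "own G v \<in> I")
          case True
          then show ?thesis using Fv by (simp add: Fv_def zero_enat_def)
        next
          case False
          have "m \<le> g ((g ^^ f t) Prev)" unfolding g_def n_def
          proof (rule step_bound[OF ar v False _ Fv])
            fix v'' I'' m'' assume a: "v'' \<in> Vs G" "I \<subseteq> I''" "I'' \<subseteq> Ps G" "l t (v'', I'') = enat m''"
            show "m'' \<le> (gstep (card (Ps G)) (card (Vs G)) ^^ f t) Prev"
            proof (cases "I'' = I")
              case True
              then show ?thesis using Suc a by (simp add: g_def n_def)
            next
              case False
              then have "m'' \<le> Prev" using H[of I'' v'' t m''] a by blast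
              then show ?thesis using gpow_infl order_trans by blast
            qed
          qed
          also have "\<dots> = (g ^^ Suc (f t)) Prev" by simp
          also have "\<dots> \<le> (g ^^ f (Suc t)) Prev" unfolding g_def by (rule gpow_le[OF fs])
          finally show ?thesis .
        qed
      qed
    qed
  qed
  have "m \<le> (g ^^ f t) Prev" using inner less.prems by blast
  also have "\<dots> \<le> (g ^^ n) Prev" unfolding g_def by (rule gpow_le[OF fle])
  also have "\<dots> = (g ^^ (n + n * k)) 0" by (simp add: Prev_def funpow_add)
  finally show ?case by (simp add: g_def n_def algebra_simps)
qed



lemma gpow_bound: "(gstep p n ^^ j) 0 + n + 1 \<le> (p + 2) ^ j * (n + 1)"
proof (induction j)
  case 0 then show ?case by simp
next
  case (Suc j)
  define x where "x = (gstep p n ^^ j) 0"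
  have "gstep p n x + n + 1 \<le> (p + 2) * (x + n + 1)"
    by (simp add: gstep_def algebra_simps)
  also have "\<dots> \<le> (p + 2) * ((p + 2) ^ j * (n + 1))"
    using Suc by (intro mult_left_mono) (simp_all add: x_def)
  also have "\<dots> = (p + 2) ^ Suc j * (n + 1)" by (simp only: power_Suc mult.assoc)
  finally show ?case by (simp only: x_def funpow.simps(2) o_apply)
qed

lemma key_pow:
  assumes n: "2 \<le> n" shows "(n + 2) ^ n \<le> n ^ (n + 3)"
proof -
  have rn: "real n > 0" using n by simp
  have e2: "exp (2::real) \<le> 9"
  proof -
    have "exp (2::real) = exp 1 ^ 2" using exp_of_nat_mult[of 2 "1::real"] by simp
    also have "\<dots> \<le> 3 ^ 2" by (rule power_mono[OF exp_le]) simp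
    finally show ?thesis by simp
  qed
  have "(1 + 2 / real n) ^ n \<le> exp (2 / real n) ^ n"
    by (rule power_mono[OF exp_ge_add_one_self]) (use rn in simp)
  also have "\<dots> = exp (real n * (2 / real n))" by (rule exp_of_nat_mult[symmetric])
  also have "\<dots> = exp 2" using rn by simp
  finally have b: "(1 + 2 / real n) ^ n \<le> exp 2" .
  have c3: "exp 2 \<le> real n ^ 3 \<or> n = 2"
  proof (cases "n = 2")
    case False
    then have "3 \<le> real n" using n by simp
    then have "27 \<le> real n ^ 3" using power_mono[of 3 "real n" 3] by simp
    then show ?thesis using e2 by simp
  qed simp
  show ?thesis
  proof (cases "n = 2")
    case True then show ?thesis by simp
  next
    case False
    have "real n * (1 + 2 / real n) = real n + 2" using rn by (simp add: field_simps)
    then have "real ((n + 2) ^ n) = (real n * (1 + 2 / real n)) ^ n" by (simp add: add.commute)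
    also have "\<dots> = real n ^ n * (1 + 2 / real n) ^ n" by (simp add: power_mult_distrib)
    also have "\<dots> \<le> real n ^ n * real n ^ 3"
      using b c3 False by (intro mult_left_mono) auto
    also have "\<dots> = real (n ^ (n + 3))" by (simp add: power_add)
    finally show ?thesis by (simp only: of_nat_le_iff)
  qed
qed

lemma final_num:
  assumes n: "2 \<le> n" and p: "p \<le> n"
  shows "(gstep p n ^^ (n * (k + 1))) 0 \<le> n ^ ((n + 3) * (k + 2))"
proof -
  have "(gstep p n ^^ (n * (k + 1))) 0 \<le> (p + 2) ^ (n * (k + 1)) * (n + 1)"
    using gpow_bound[where p=p and n=n and j="n * (k + 1)"] by linarith
  also have "\<dots> \<le> (n + 2) ^ (n * (k + 1)) * (n + 1)"
    using p by (intro mult_right_mono power_mono) simp_all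
  also have "\<dots> = ((n + 2) ^ n) ^ (k + 1) * (n + 1)" by (simp only: power_mult)
  also have "\<dots> \<le> (n ^ (n + 3)) ^ (k + 1) * n ^ (n + 3)"
  proof (intro mult_mono power_mono key_pow[OF n])
    have "2 * n \<le> n * n" by (rule mult_right_mono[OF n]) simp
    then have "n + 1 \<le> n ^ 2" using n unfolding power2_eq_square by linarith
    also have "\<dots> \<le> n ^ (n + 3)" using n by (intro power_increasing) simp_all
    finally show "n + 1 \<le> n ^ (n + 3)" .
  qed simp_all
  also have "\<dots> = n ^ ((n + 3) * (k + 1) + (n + 3))" by (simp only: power_mult[symmetric] power_add[symmetric])
  also have "(n + 3) * (k + 1) + (n + 3) = (n + 3) * (k + 2)" by simp
  finally show ?thesis .
qed



lemma reach_Ps: "(x0 G v0, u) \<in> (XE G)\<^sup>* \<Longrightarrow> snd u \<subseteq> Ps G"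
proof (induction rule: rtrancl_induct)
  case base then show ?case by (auto simp: x0_def)
next
  case (step y z) then show ?case using XE_D[OF step(2)] by auto
qed

lemma mR_le: "(\<And>m. enat m \<in> S \<Longrightarrow> m \<le> B) \<Longrightarrow> mR S \<le> B"
proof -
  assume h: "\<And>m. enat m \<in> S \<Longrightarrow> m \<le> B"
  have fin: "finite {n. enat n \<in> S}" by (rule finite_subset[of _ "{..B}"]) (use h in auto)
  show ?thesis
  proof (cases "\<exists>n. enat n \<in> S")
    case True
    then have "Max {n. enat n \<in> S} \<le> B" using fin h by (subst Max_le_iff) auto
    then show ?thesis using True by (simp add: mR_def)
  qed (simp add: mR_def)
qed

theorem theorem3p10:
  shows "\<exists>C::real. \<forall>G v0 J. arena G \<and> v0 \<in> Vs G \<and> order_ok G v0 J \<longrightarrow>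
     (\<forall>l\<in>{1..Nreg G v0}.
        real (mR (lam G v0 J (kstar G v0 J l) ` VJ G J l))
          \<le> C * real (card (Vs G)) ^ ((card (Vs G) + 3) * (card (Ps G - J l) + 2))
      \<and> real (mR (lam G v0 J (kstar G v0 J l) ` Vge G v0 J l))
          \<le> C * real (card (Vs G)) ^ ((card (Vs G) + 3) * (card (Ps G) + 2)))
     \<and> real (mR (lam G v0 J (kstar G v0 J 1) ` XV G))
          \<le> C * real (card (Vs G)) ^ ((card (Vs G) + 3) * (card (Ps G) + 2))"
proof (rule exI[of _ 1], intro allI impI)
  fix G v0 J
  assume A: "arena G \<and> v0 \<in> Vs G \<and> order_ok G v0 J"
  have ar: "arena G" using A by simp
  define n where "n = card (Vs G)"
  define p where "p = card (Ps G)"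
  have n2: "2 \<le> n" and pn: "p \<le> n" and fP: "finite (Ps G)"
    using ar by (auto simp: arena_def n_def p_def)
  have l0: "lam G v0 J 0 = lam0 G" by (simp add: lam_def)
  have lS: "\<And>t. lam G v0 J (Suc t) = upd G (lam G v0 J t) (Vge G v0 J (snd (lamseq G v0 J t)))"
    by (simp add: lam_def Let_def)
  have UB: "m \<le> n ^ ((n + 3) * (card (Ps G - I) + 2))"
    if "I \<subseteq> Ps G" "v \<in> Vs G" "lam G v0 J t (v, I) = enat m" for t v I m
  proof -
    have "m \<le> (gstep p n ^^ (n * (card (Ps G - I) + 1))) 0"
      using main_bound[OF ar l0 lS refl that] by (simp add: n_def p_def)
    also have "\<dots> \<le> n ^ ((n + 3) * (card (Ps G - I) + 2))" by (rule final_num[OF n2 pn])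
    finally show ?thesis .
  qed
  have UBp: "m \<le> n ^ ((n + 3) * (p + 2))"
    if "I \<subseteq> Ps G" "v \<in> Vs G" "lam G v0 J t (v, I) = enat m" for t v I m
  proof -
    have "card (Ps G - I) \<le> p" unfolding p_def using fP by (intro card_mono) auto
    then have "n ^ ((n + 3) * (card (Ps G - I) + 2)) \<le> n ^ ((n + 3) * (p + 2))"
      using n2 by (intro power_increasing) simp_all
    then show ?thesis using UB[OF that] by simp
  qed
  have JP: "J l \<subseteq> Ps G" if "l \<in> {1..Nreg G v0}" for l
  proof -
    have "J l \<in> Iset G v0" using A that by (auto simp: order_ok_def bij_betw_def)
    then obtain u where "(x0 G v0, u) \<in> (XE G)\<^sup>*" "J l = snd u" by (auto simp: Iset_def)
    then show ?thesis using reach_Ps by metis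
  qed
  have rl: "real (mR S) \<le> 1 * real n ^ e" if "mR S \<le> n ^ e" for S e
  proof -
    have "real (mR S) \<le> real (n ^ e)" using that by (simp only: of_nat_le_iff)
    then show ?thesis by simp
  qed
  show "(\<forall>l\<in>{1..Nreg G v0}.
        real (mR (lam G v0 J (kstar G v0 J l) ` VJ G J l))
          \<le> 1 * real (card (Vs G)) ^ ((card (Vs G) + 3) * (card (Ps G - J l) + 2))
      \<and> real (mR (lam G v0 J (kstar G v0 J l) ` Vge G v0 J l))
          \<le> 1 * real (card (Vs G)) ^ ((card (Vs G) + 3) * (card (Ps G) + 2)))
     \<and> real (mR (lam G v0 J (kstar G v0 J 1) ` XV G))
          \<le> 1 * real (card (Vs G)) ^ ((card (Vs G) + 3) * (card (Ps G) + 2))"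
    unfolding n_def[symmetric] p_def[symmetric]
  proof (intro conjI ballI)
    fix l assume l: "l \<in> {1..Nreg G v0}"
    show "real (mR (lam G v0 J (kstar G v0 J l) ` VJ G J l)) \<le> 1 * real n ^ ((n + 3) * (card (Ps G - J l) + 2))"
    proof (rule rl, rule mR_le)
      fix m assume "enat m \<in> lam G v0 J (kstar G v0 J l) ` VJ G J l"
      then obtain v where v: "v \<in> Vs G" "lam G v0 J (kstar G v0 J l) (v, J l) = enat m"
        by (auto simp: VJ_def)
      show "m \<le> n ^ ((n + 3) * (card (Ps G - J l) + 2))" by (rule UB[OF JP[OF l] v])
    qed
    show "real (mR (lam G v0 J (kstar G v0 J l) ` Vge G v0 J l)) \<le> 1 * real n ^ ((n + 3) * (p + 2))"
    proof (rule rl, rule mR_le)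
      fix m assume "enat m \<in> lam G v0 J (kstar G v0 J l) ` Vge G v0 J l"
      then obtain v k where vk: "v \<in> Vs G" "k \<in> {l..Nreg G v0}" "lam G v0 J (kstar G v0 J l) (v, J k) = enat m"
        by (auto simp: Vge_def VJ_def)
      have "k \<in> {1..Nreg G v0}" using vk(2) l by auto
      then show "m \<le> n ^ ((n + 3) * (p + 2))" using UBp[OF JP vk(1,3)] by simp
    qed
  next
    show "real (mR (lam G v0 J (kstar G v0 J 1) ` XV G)) \<le> 1 * real n ^ ((n + 3) * (p + 2))"
    proof (rule rl, rule mR_le)
      fix m assume "enat m \<in> lam G v0 J (kstar G v0 J 1) ` XV G"
      then obtain v I where v: "v \<in> Vs G" "I \<subseteq> Ps G" "lam G v0 J (kstar G v0 J 1) (v, I) = enat m"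
        by (auto simp: XV_def)
      show "m \<le> n ^ ((n + 3) * (p + 2))" by (rule UBp[OF v(2,1,3)])
    qed
  qed
qed


end
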